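(* Let $0=x_1<\dots<x_N=1$ be a partition of $I=[0,1]$, let $\{q_n\}$ be a sequence in $(0,1]$ with $\lim q_n=1$, and let $\alpha_i$, $i\in\mathbb{N}_{N-1}$, be bounded functions on $I$ with $\|\alpha_i\|_\infty<1$. If $S=\{f_s:s\in\mathbb{N}\}\subset C[0,1]$ is dense in $C[0,1]$ (sup-norm), then \[ \bigcup_{n=1}^\infty\operatorname{span}\{\mathcal{F}^{(q_n,\alpha)}_n(f_s):s\in\mathbb{N}\} \] is also dense in $C[0,1]$.
   Context: For $q\in(0,1]$: $[k]_q=\frac{1-q^k}{1-q}$ ($q\ne1$), $[k]_1=k$, $q$-factorials, $\binom{n}{k}_q=\frac{[n]_q!}{[k]_q![n-k]_q!}$. On $[0,1]$ the quantum MKZ operator is $M_{n,q}h(x)=\prod_{j=0}^n(1-q^jx)\sum_{k\ge0}\binom{n+k}{k}_q x^k h\!\left(\frac{[k]_q}{[k+n]_q}\right)$ for $0\le x<1$, $M_{n,q}h(1)=h(1)$. Let $u_i(x)=a_ix+b_i$ be the affine maps with $u_i(0)=x_i$, $u_i(1)=x_{i+1}$, $i\in\mathbb{N}_{N-1}$. For $h\in C[0,1]$, $\mathcal{F}^{(q,\alpha)}_n(h)$ denotes the unique bounded function $G:[0,1]\to\mathbb{R}$ with $G(u_i(x))=h(u_i(x))+\alpha_i(x)(G(x)-M_{n,q}h(x))$ for all $x\in I$, $i\in\mathbb{N}_{N-1}$. *)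

theory Defs
  imports "HOL-Analysis.Analysis"
begin

definition qint :: "real \<Rightarrow> nat \<Rightarrow> real" where
  "qint q k = (if q = 1 then real k else (1 - q ^ k) / (1 - q))"

definition qfact :: "real \<Rightarrow> nat \<Rightarrow> real" where
  "qfact q k = (\<Prod>j = 1..k. qint q j)"

definition qbinom :: "real \<Rightarrow> nat \<Rightarrow> nat \<Rightarrow> real" where
  "qbinom q n k = qfact q n / (qfact q k * qfact q (n - k))"

definition MKZ :: "nat \<Rightarrow> real \<Rightarrow> (real \<Rightarrow> real) \<Rightarrow> real \<Rightarrow> real" where
  "MKZ n q h x =
     (if x = 1 then h 1
      else (\<Prod>j = 0..n. (1 - q ^ j * x)) *
           (\<Sum>k. qbinom q (n + k) k * x ^ k * h (qint q k / qint q (k + n))))"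

definition affmap :: "(nat \<Rightarrow> real) \<Rightarrow> nat \<Rightarrow> real \<Rightarrow> real" where
  "affmap xs i t = (xs (Suc i) - xs i) * t + xs i"

definition fractal ::
  "(nat \<Rightarrow> real) \<Rightarrow> nat \<Rightarrow> (nat \<Rightarrow> real \<Rightarrow> real) \<Rightarrow> nat \<Rightarrow> real \<Rightarrow> (real \<Rightarrow> real) \<Rightarrow> real \<Rightarrow> real"
  where
  "fractal xs N \<alpha> n q h = (THE G.
      (\<forall>t. t \<notin> {0..1} \<longrightarrow> G t = 0) \<and>
      (\<exists>B. \<forall>t\<in>{0..1}. \<bar>G t\<bar> \<le> B) \<and>
      (\<forall>i\<in>{1..N-1}. \<forall>t\<in>{0..1}.
          G (affmap xs i t) = h (affmap xs i t) + \<alpha> i t * (G t - MKZ n q h t)))"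

end

theory Submission
  imports Defs
begin


lemma qint_sum: "qint q k = (\<Sum>j<k. q^j)"
  by (simp add: qint_def sum_gp_strict)

lemma qint_0[simp]: "qint q 0 = 0" by (simp add: qint_sum)

lemma qint_add: "qint q (a + b) = qint q a + q^a * qint q b"
  by (induct b) (simp_all add: qint_sum power_add algebra_simps)

lemma qint_Suc: "qint q (Suc k) = 1 + q * qint q k"
  unfolding qint_sum by (subst sum.lessThan_Suc_shift) (simp add: sum_distrib_left)

lemma qint_nonneg: "0 \<le> q \<Longrightarrow> 0 \<le> qint q k"
  by (simp add: qint_sum sum_nonneg)

lemma qint_ge1: "0 \<le> q \<Longrightarrow> 1 \<le> k \<Longrightarrow> 1 \<le> qint q k"
  by (cases k) (auto simp: qint_Suc qint_nonneg)

lemma qint_mono: "0 \<le> q \<Longrightarrow> a \<le> b \<Longrightarrow> qint q a \<le> qint q b"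
  using qint_add[of q a "b - a"] qint_nonneg[of q "b-a"] by simp

lemma qfact_Suc: "qfact q (Suc k) = qfact q k * qint q (Suc k)"
  by (simp add: qfact_def prod.cl_ivl_Suc)

lemma qfact_0[simp]: "qfact q 0 = 1" by (simp add: qfact_def)

lemma qfact_pos: "0 \<le> q \<Longrightarrow> 0 < qfact q k"
proof (induct k)
  case (Suc k) then show ?case using qint_ge1[of q "Suc k"] by (simp add: qfact_Suc)
qed simp

definition cc :: "real \<Rightarrow> nat \<Rightarrow> nat \<Rightarrow> real" where
  "cc q n k = qbinom q (n + k) k"

lemma cc_alt: "cc q n k = qfact q (n + k) / (qfact q k * qfact q n)"
  by (simp add: cc_def qbinom_def)

lemma cc_0[simp]: "0 \<le> q \<Longrightarrow> cc q n 0 = 1"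
  using qfact_pos[of q n] by (simp add: cc_alt)

lemma cc_n0: "0 \<le> q \<Longrightarrow> cc q 0 k = 1"
  using qfact_pos[of q k] by (simp add: cc_alt)

lemma cc_nonneg: assumes "0 \<le> q" shows "0 \<le> cc q n k"
  using qfact_pos[OF assms, of "n+k"] qfact_pos[OF assms, of k] qfact_pos[OF assms, of n]
  unfolding cc_alt by simp

lemma cc_Pascal:
  assumes "0 \<le> q"
  shows "cc q (Suc n) (Suc k) = cc q n (Suc k) + q^(Suc n) * cc q (Suc n) k"
proof -
  have e1: "Suc n + Suc k = Suc (Suc (n + k))" "n + Suc k = Suc (n + k)" "Suc n + k = Suc (n + k)" by simp_all
  have id: "qint q (Suc (Suc (n + k))) = qint q (Suc n) + q^(Suc n) * qint q (Suc k)"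
    using qint_add[of q "Suc n" "Suc k"] by simp
  have p: "0 < qfact q (Suc (n+k))" "0 < qfact q k" "0 < qfact q n"
    "0 < qint q (Suc k)" "0 < qint q (Suc n)"
    using qfact_pos[OF assms] qint_ge1[OF assms] by (auto intro: less_le_trans[OF zero_less_one])
  show ?thesis unfolding cc_alt e1 qfact_Suc[of q "Suc (n+k)"] qfact_Suc[of q k] qfact_Suc[of q n] id
    using p by (simp add: field_simps)
qed

lemma cc_shift:
  assumes "0 \<le> q"
  shows "cc q n (Suc k) * qint q (Suc k) / qint q (Suc k + n) = cc q n k"
proof -
  have e1: "n + Suc k = Suc (n + k)" "Suc k + n = Suc (n + k)" by simp_all
  have p: "0 < qfact q (n+k)" "0 < qfact q k" "0 < qfact q n"
    "0 < qint q (Suc k)" "0 < qint q (Suc (n+k))"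
    using qfact_pos[OF assms] qint_ge1[OF assms] by (auto intro: less_le_trans[OF zero_less_one])
  show ?thesis unfolding cc_alt e1 qfact_Suc
    using p by (simp add: field_simps)
qed

lemma cc_conv:
  assumes "0 \<le> q"
  shows "cc q (Suc n) k = (\<Sum>i\<le>k. (q^(Suc n))^i * cc q n (k-i))"
proof (induct k)
  case 0 then show ?case using assms by simp
next
  case (Suc k)
  have "(\<Sum>i\<le>Suc k. (q^(Suc n))^i * cc q n (Suc k-i))
      = cc q n (Suc k) + (\<Sum>i\<le>k. (q^(Suc n))^(Suc i) * cc q n (k-i))"
    by (subst sum.atMost_Suc_shift) simp
  also have "\<dots> = cc q n (Suc k) + q^(Suc n) * (\<Sum>i\<le>k. (q^(Suc n))^i * cc q n (k-i))"
    by (simp add: sum_distrib_left mult.assoc)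
  also have "\<dots> = cc q (Suc n) (Suc k)"
    using Suc cc_Pascal[OF assms, of n k] by simp
  finally show ?case by simp
qed

definition PP :: "real \<Rightarrow> nat \<Rightarrow> real \<Rightarrow> real" where
  "PP q n x = (\<Prod>j = 0..n. (1 - q^j * x))"

lemma gen:
  assumes q: "0 < q" "q \<le> 1" and x: "0 \<le> x" "x < 1"
  shows "summable (\<lambda>k. cc q n k * x^k) \<and> (\<Sum>k. cc q n k * x^k) * PP q n x = 1"
proof (induct n)
  case 0
  have "summable (\<lambda>k. x^k)" "(\<Sum>k. x^k) = 1 / (1 - x)"
    using x by (auto intro!: summable_geometric suminf_geometric)
  then show ?case using x q by (simp add: cc_n0 PP_def)
next
  case (Suc n)
  define a where "a k = (q^(Suc n) * x)^k" for k
  define b where "b = (\<lambda>k. cc q n k * x^k)"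
  have qx: "0 \<le> q^(Suc n) * x" "q^(Suc n) * x < 1"
  proof -
    show "0 \<le> q^(Suc n) * x" using q x by simp
    have "q^(Suc n) \<le> 1" using q by (intro power_le_one) auto
    then have "q^(Suc n) * x \<le> x" using mult_left_le_one_le[of x "q^Suc n"] x q by simp
    then show "q^(Suc n) * x < 1" using x by simp
  qed
  have sa: "summable (\<lambda>k. norm (a k))" unfolding a_def using qx
    by (simp add: summable_geometric)
  have suma: "(\<Sum>k. a k) = 1 / (1 - q^(Suc n) * x)" unfolding a_def using qx
    by (simp add: suminf_geometric)
  have bn: "norm (b k) = b k" for k using cc_nonneg[of q n k] q x by (simp add: b_def)
  have sb: "summable (\<lambda>k. norm (b k))" unfolding bn using Suc by (simp add: b_def)
  have eq: "cc q (Suc n) k * x^k = (\<Sum>i\<le>k. a i * b (k - i))" for k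
  proof -
    have "cc q (Suc n) k * x^k = (\<Sum>i\<le>k. (q^(Suc n))^i * cc q n (k-i) * x^k)"
      using cc_conv[of q n k] q by (simp add: sum_distrib_right)
    also have "\<dots> = (\<Sum>i\<le>k. a i * b (k - i))"
    proof (rule sum.cong)
      fix i assume "i \<in> {..k}"
      then have "x^k = x^i * x^(k-i)" by (simp add: power_add[symmetric])
      then show "(q^(Suc n))^i * cc q n (k-i) * x^k = a i * b (k - i)"
        by (simp add: a_def b_def power_mult_distrib)
    qed simp
    finally show ?thesis .
  qed
  have s1: "summable (\<lambda>k. cc q (Suc n) k * x^k)"
    unfolding eq using summable_Cauchy_product[OF sa sb] .
  have s2: "(\<Sum>k. cc q (Suc n) k * x^k) = (\<Sum>k. a k) * (\<Sum>k. b k)"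
    unfolding eq using Cauchy_product[OF sa sb] by simp
  have pp: "PP q (Suc n) x = PP q n x * (1 - q^(Suc n) * x)"
    by (simp add: PP_def)
  have m: "(\<Sum>k. cc q (Suc n) k * x^k) * PP q (Suc n) x
     = ((\<Sum>k. a k) * (1 - q^(Suc n) * x)) * ((\<Sum>k. b k) * PP q n x)"
    unfolding s2 pp by (simp only: mult_ac)
  have "(\<Sum>k. a k) * (1 - q^(Suc n) * x) = 1" unfolding suma using qx by simp
  then show ?case using s1 m Suc unfolding b_def by simp
qed

definition tt :: "real \<Rightarrow> nat \<Rightarrow> nat \<Rightarrow> real" where
  "tt q n k = qint q k / qint q (k + n)"

lemma qint_pos: "0 \<le> q \<Longrightarrow> 1 \<le> k \<Longrightarrow> 0 < qint q k"
  using qint_ge1[of q k] by simp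

lemma tt_0[simp]: "tt q n 0 = 0" by (simp add: tt_def)

lemma tt_range:
  assumes "0 \<le> q" "1 \<le> n"
  shows "0 \<le> tt q n k \<and> tt q n k \<le> 1"
proof -
  have "qint q k \<le> qint q (k + n)" using qint_mono[OF assms(1)] by simp
  moreover have "0 < qint q (k + n)" using qint_pos[OF assms(1)] assms by simp
  ultimately show ?thesis using qint_nonneg[OF assms(1), of k] by (simp add: tt_def)
qed

lemma tt_Suc_le:
  assumes "0 \<le> q" "q \<le> 1" "1 \<le> n"
  shows "tt q n (Suc k) \<le> 1 / qint q n + tt q n k"
proof -
  define Q where "Q = qint q n"
  define D where "D = qint q (k + n)"
  define D' where "D' = qint q (Suc k + n)"
  define K where "K = qint q k"
  have Q: "0 < Q" using qint_pos[OF assms(1) assms(3)] by (simp add: Q_def)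
  have QD: "Q \<le> D" unfolding Q_def D_def by (rule qint_mono[OF assms(1)]) simp
  have DD: "D \<le> D'" unfolding D'_def D_def by (rule qint_mono[OF assms(1)]) simp
  have K: "0 \<le> K" by (simp add: K_def qint_nonneg assms)
  have "tt q n (Suc k) = (1 + q * K) / D'" by (simp add: tt_def qint_Suc K_def D'_def)
  also have "\<dots> = 1 / D' + q * K / D'" by (simp add: add_divide_distrib)
  also have "\<dots> \<le> 1 / Q + K / D"
  proof (rule add_mono)
    show "1 / D' \<le> 1 / Q" using Q QD DD by (simp add: frac_le)
    have "q * K \<le> K" using assms K by (simp add: mult_left_le_one_le)
    then show "q * K / D' \<le> K / D" using Q QD DD K
      by (meson divide_mono less_le_trans mult_nonneg_nonneg assms(1) dual_order.trans)
  qed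
  finally show ?thesis by (simp add: Q_def tt_def K_def D_def)
qed

lemma moment1:
  assumes q: "0 < q" "q \<le> 1" and n: "1 \<le> n" and x: "0 \<le> x" "x < 1"
  shows "(\<lambda>k. cc q n k * x^k * tt q n k) sums (x * (\<Sum>k. cc q n k * x^k))"
proof -
  have sb: "summable (\<lambda>k. cc q n k * x^k)" using gen[OF q x] by simp
  have eq: "cc q n (Suc k) * x^(Suc k) * tt q n (Suc k) = x * (cc q n k * x^k)" for k
  proof -
    have "0 < qint q (Suc k + n)" using qint_pos[of q "Suc k + n"] q by simp
    then show ?thesis using cc_shift[of q n k] q by (simp add: tt_def field_simps)
  qed
  have "(\<lambda>k. cc q n (Suc k) * x^(Suc k) * tt q n (Suc k)) sums (x * (\<Sum>k. cc q n k * x^k))"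
    unfolding eq by (intro sums_mult summable_sums sb)
  then show ?thesis using sums_Suc_iff[of "\<lambda>k. cc q n k * x^k * tt q n k"] by simp
qed

lemma moment2:
  assumes q: "0 < q" "q \<le> 1" and n: "1 \<le> n" and x: "0 \<le> x" "x < 1"
  shows "\<exists>T. (\<lambda>k. cc q n k * x^k * (tt q n k)^2) sums T \<and>
     T \<le> x * ((\<Sum>k. cc q n k * x^k) / qint q n + x * (\<Sum>k. cc q n k * x^k))"
proof -
  define b where "b = (\<lambda>k. cc q n k * x^k)"
  define S where "S = (\<Sum>k. b k)"
  have sb: "b sums S" using gen[OF q x] by (simp add: b_def S_def summable_sums)
  have m1: "(\<lambda>k. b k * tt q n k) sums (x * S)" using moment1[OF q n x] by (simp add: b_def S_def)
  have bnn: "0 \<le> b k" for k using cc_nonneg[of q n k] q x by (simp add: b_def)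
  define g where "g k = x * (b k / qint q n + b k * tt q n k)" for k
  have sg: "g sums (x * (S / qint q n + x * S))"
    unfolding g_def by (intro sums_mult sums_add sums_divide sb m1)
  have eq: "b (Suc k) * (tt q n (Suc k))^2 = x * b k * tt q n (Suc k)" for k
  proof -
    have "0 < qint q (Suc k + n)" using qint_pos[of q "Suc k + n"] q by simp
    then show ?thesis using cc_shift[of q n k] q by (simp add: b_def tt_def power2_eq_square field_simps)
  qed
  have le: "b (Suc k) * (tt q n (Suc k))^2 \<le> g k" for k
  proof -
    have "x * b k * tt q n (Suc k) \<le> x * b k * (1 / qint q n + tt q n k)"
      using tt_Suc_le[of q n k] q n x bnn[of k] by (intro mult_left_mono) auto
    then show ?thesis unfolding eq g_def by (simp add: algebra_simps)
  qed
  have nn: "0 \<le> b (Suc k) * (tt q n (Suc k))^2" for k using bnn by simp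
  have s1: "summable (\<lambda>k. b (Suc k) * (tt q n (Suc k))^2)"
    by (rule summable_comparison_test'[where g=g and N=0]) (use sg nn le in \<open>auto simp: sums_iff\<close>)
  have l1: "(\<Sum>k. b (Suc k) * (tt q n (Suc k))^2) \<le> x * (S / qint q n + x * S)"
    using suminf_le[OF le s1] sg by (simp add: sums_iff)
  have s2: "summable (\<lambda>k. b k * (tt q n k)^2)" using s1 summable_Suc_iff[of "\<lambda>k. b k * (tt q n k)^2"] by simp
  have es: "(\<Sum>k. b k * (tt q n k)^2) = (\<Sum>k. b (Suc k) * (tt q n (Suc k))^2)"
    using suminf_split_head[OF s2] by simp
  have A: "(\<lambda>k. b k * (tt q n k)^2) sums (\<Sum>k. b k * (tt q n k)^2)"
    by (rule summable_sums[OF s2])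
  have B: "(\<Sum>k. b k * (tt q n k)^2) \<le> x * (S / qint q n + x * S)"
    using es l1 by simp
  show ?thesis using A B unfolding S_def b_def by blast
qed

lemma MKZ_eq: "x \<noteq> 1 \<Longrightarrow> MKZ n q h x = PP q n x * (\<Sum>k. cc q n k * x^k * h (tt q n k))"
  by (simp add: MKZ_def PP_def cc_def tt_def)

lemma PP_nonneg:
  assumes "0 < q" "q \<le> 1" "0 \<le> x" "x < 1" shows "0 \<le> PP q n x"
  unfolding PP_def
proof (intro prod_nonneg)
  fix j assume "j \<in> {0..n}"
  have "q^j \<le> 1" using assms by (intro power_le_one) auto
  then have "q^j * x \<le> x" using mult_left_le_one_le[of x "q^j"] assms by simp
  then show "0 \<le> 1 - q^j * x" using assms by simp
qed

lemma MKZ_approx: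
  assumes q: "0 < q" "q \<le> 1" and n: "1 \<le> n" and x: "0 \<le> x" "x \<le> 1"
    and e: "0 \<le> e" and L: "0 \<le> L"
    and hb: "\<And>s y. s \<in> {0..1} \<Longrightarrow> y \<in> {0..1} \<Longrightarrow> \<bar>h s - h y\<bar> \<le> e + L * (s - y)^2"
  shows "\<bar>MKZ n q h x - h x\<bar> \<le> e + L / qint q n"
proof (cases "x = 1")
  case True
  have "0 \<le> L / qint q n" using L qint_pos[of q n] q n by simp
  then show ?thesis using True e by (simp add: MKZ_def)
next
  case False
  with x have x1: "x < 1" by simp
  define b where "b = (\<lambda>k. cc q n k * x^k)"
  define S where "S = (\<Sum>k. b k)"
  define P where "P = PP q n x"
  define Q where "Q = qint q n"
  have Q: "0 < Q" using qint_pos[of q n] q n by (simp add: Q_def)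
  have PS: "S * P = 1" using gen[OF q x(1) x1] by (simp add: b_def S_def P_def)
  have P0: "0 \<le> P" using PP_nonneg[OF q x(1) x1] by (simp add: P_def)
  have sb: "b sums S" using gen[OF q x(1) x1] by (simp add: b_def S_def summable_sums)
  have m1: "(\<lambda>k. b k * tt q n k) sums (x * S)" using moment1[OF q n x(1) x1] by (simp add: b_def S_def)
  obtain T where m2: "(\<lambda>k. b k * (tt q n k)^2) sums T" and T: "T \<le> x * (S / Q + x * S)"
    using moment2[OF q n x(1) x1] by (auto simp: b_def S_def Q_def)
  have bnn: "0 \<le> b k" for k using cc_nonneg[of q n k] q x by (simp add: b_def)
  have S0: "0 \<le> S" using sb bnn unfolding sums_iff by (metis suminf_nonneg)
  define d where "d k = b k * (h (tt q n k) - h x)" for k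
  define ee where "ee k = e * b k + L * (b k * (tt q n k)^2 - 2 * x * (b k * tt q n k) + x^2 * b k)" for k
  have see: "ee sums (e * S + L * (T - 2 * x * (x * S) + x^2 * S))"
    unfolding ee_def by (intro sums_add sums_mult sums_diff sb m1 m2)
  have dle: "norm (d k) \<le> ee k" for k
  proof -
    have tr: "tt q n k \<in> {0..1}" using tt_range[of q n k] q n by simp
    have "\<bar>h (tt q n k) - h x\<bar> \<le> e + L * (tt q n k - x)^2" using hb[OF tr] x by simp
    then have "b k * \<bar>h (tt q n k) - h x\<bar> \<le> b k * (e + L * (tt q n k - x)^2)"
      using bnn by (intro mult_left_mono) auto
    moreover have "norm (d k) = b k * \<bar>h (tt q n k) - h x\<bar>"
      using bnn[of k] by (simp add: d_def abs_mult)
    ultimately show ?thesis by (simp add: ee_def power2_eq_square algebra_simps)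
  qed
  have sd: "summable (\<lambda>k. norm (d k))"
    by (rule summable_comparison_test'[where g=ee and N=0]) (use see dle in \<open>auto simp: sums_iff\<close>)
  have sd': "summable d" using sd summable_norm_cancel by blast
  have "norm (suminf d) \<le> (\<Sum>k. norm (d k))" by (rule summable_norm[OF sd])
  also have "\<dots> \<le> suminf ee" using suminf_le[OF dle sd] see by (simp add: sums_iff)
  also have "\<dots> = e * S + L * (T - 2 * x * (x * S) + x^2 * S)" using see by (simp add: sums_iff)
  also have "\<dots> \<le> e * S + L * (x * S / Q)"
    using T L by (intro add_left_mono mult_left_mono) (auto simp: algebra_simps power2_eq_square)
  finally have dS: "\<bar>suminf d\<bar> \<le> e * S + L * (x * S / Q)" by simp
  have split: "(\<lambda>k. cc q n k * x^k * h (tt q n k)) sums (h x * S + suminf d)"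
  proof -
    have "(\<lambda>k. h x * b k + d k) sums (h x * S + suminf d)"
      by (intro sums_add sums_mult sb summable_sums sd')
    moreover have "(\<lambda>k. h x * b k + d k) = (\<lambda>k. cc q n k * x^k * h (tt q n k))"
      by (auto simp: d_def b_def algebra_simps)
    ultimately show ?thesis by simp
  qed
  have "MKZ n q h x - h x = P * suminf d"
    using MKZ_eq[OF False, of n q h] split PS by (simp add: sums_iff P_def algebra_simps)
  then have "\<bar>MKZ n q h x - h x\<bar> = P * \<bar>suminf d\<bar>" using P0 by (simp add: abs_mult)
  also have "\<dots> \<le> P * (e * S + L * (x * S / Q))" using dS P0 by (rule mult_left_mono)
  also have "\<dots> = e * (S * P) + L * x * (S * P) / Q" by (simp add: algebra_simps)
  also have "\<dots> = e + L * x / Q" using PS by simp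
  also have "\<dots> \<le> e + L / Q"
  proof -
    have "L * x \<le> L" using x L by (simp add: mult_left_le)
    then show ?thesis using Q by (simp add: divide_right_mono)
  qed
  finally show ?thesis by (simp add: Q_def)
qed

lemma unif_bound:
  fixes h :: "real \<Rightarrow> real"
  assumes cont: "continuous_on {0..1} h" and e: "0 < e"
  shows "\<exists>L\<ge>0. \<forall>s\<in>{0..1}. \<forall>y\<in>{0..1}. \<bar>h s - h y\<bar> \<le> e + L * (s - y)^2"
proof -
  have uc: "uniformly_continuous_on {0..1::real} h"
    using compact_uniformly_continuous[OF cont] by simp
  obtain d where d: "d > 0" and dd: "\<forall>x\<in>{0..1}. \<forall>x'\<in>{0..1}. dist x' x < d \<longrightarrow> dist (h x') (h x) < e"
    using uc e unfolding uniformly_continuous_on_def by metis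
  have "compact (h ` {0..1})" by (intro compact_continuous_image cont compact_Icc)
  then obtain K where K: "\<forall>y\<in>h ` {0..1}. norm y \<le> K" using compact_imp_bounded bounded_iff by metis
  have K0: "0 \<le> K" using K by (metis abs_ge_zero atLeastAtMost_iff image_eqI order_trans real_norm_def zero_le_one order_refl)
  define L where "L = 2 * K / d^2"
  have "\<forall>s\<in>{0..1}. \<forall>y\<in>{0..1}. \<bar>h s - h y\<bar> \<le> e + L * (s - y)^2"
  proof (intro ballI)
    fix s y :: real assume s: "s \<in> {0..1}" and y: "y \<in> {0..1}"
    have L0: "0 \<le> L * (s - y)^2" using K0 d by (simp add: L_def)
    show "\<bar>h s - h y\<bar> \<le> e + L * (s - y)^2"
    proof (cases "\<bar>s - y\<bar> < d")
      case True
      then have "\<bar>h s - h y\<bar> < e" using dd s y by (auto simp: dist_real_def)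
      then show ?thesis using L0 by simp
    next
      case False
      then have "d^2 \<le> (s - y)^2" using d by (metis abs_le_square_iff not_less abs_of_pos)
      then have "2 * K \<le> L * (s - y)^2" using d K0 by (simp add: L_def field_simps mult_left_mono)
      moreover have "\<bar>h s\<bar> \<le> K" "\<bar>h y\<bar> \<le> K" using K s y by auto
      ultimately show ?thesis using e by linarith
    qed
  qed
  then show ?thesis using K0 d by (intro exI[of _ L]) (simp add: L_def)
qed



locale frac_setup =
  fixes xs :: "nat \<Rightarrow> real" and N :: nat and \<alpha> :: "nat \<Rightarrow> real \<Rightarrow> real" and c :: real
  assumes N2: "2 \<le> N" and x1: "xs 1 = 0" and xN: "xs N = 1"
    and inc: "\<And>i. 1 \<le> i \<Longrightarrow> i < N \<Longrightarrow> xs i < xs (Suc i)"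
    and c0: "0 \<le> c" and c1: "c < 1"
    and ab: "\<And>i t. i \<in> {1..N-1} \<Longrightarrow> t \<in> {0..1} \<Longrightarrow> \<bar>\<alpha> i t\<bar> \<le> c"
begin

lemma mono_le:
  assumes "1 \<le> i" "i \<le> j" "j \<le> N" shows "xs i \<le> xs j"
  using assms(2,3)
proof (induct j rule: dec_induct)
  case (step n) then show ?case using inc[of n] assms(1) by simp
qed simp

lemma mono_less: "1 \<le> i \<Longrightarrow> i < j \<Longrightarrow> j \<le> N \<Longrightarrow> xs i < xs j"
  using inc[of i] mono_le[of "Suc i" j] by simp

lemma xs_range: "1 \<le> i \<Longrightarrow> i \<le> N \<Longrightarrow> 0 \<le> xs i \<and> xs i \<le> 1"
  using mono_le[of 1 i] mono_le[of i N] x1 xN by simp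

lemma aff_range:
  assumes "i \<in> {1..N-1}" "t \<in> {0..1}"
  shows "xs i \<le> affmap xs i t \<and> affmap xs i t \<le> xs (Suc i) \<and> affmap xs i t \<in> {0..1}"
proof -
  have "1 \<le> i" "i < N" using assms N2 by auto
  then have d: "0 < xs (Suc i) - xs i" using inc[of i] by simp
  have "xs i \<le> affmap xs i t" using d assms by (simp add: affmap_def)
  moreover have "affmap xs i t \<le> xs (Suc i)"
  proof -
    have "(xs (Suc i) - xs i) * t \<le> (xs (Suc i) - xs i)" using d assms(2) by (intro mult_left_le) auto
    then show ?thesis by (simp add: affmap_def)
  qed
  moreover have "0 \<le> xs i" "xs (Suc i) \<le> 1" using xs_range[of i] xs_range[of "Suc i"] assms by auto
  ultimately show ?thesis by simp
qed

definition idx :: "real \<Rightarrow> nat" where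
  "idx y = (LEAST i. 1 \<le> i \<and> i < N \<and> y \<le> xs (Suc i))"

definition uinv :: "nat \<Rightarrow> real \<Rightarrow> real" where
  "uinv i y = (y - xs i) / (xs (Suc i) - xs i)"

lemma idx_props:
  assumes "y \<in> {0..1}"
  shows "1 \<le> idx y \<and> idx y < N \<and> xs (idx y) \<le> y \<and> y \<le> xs (Suc (idx y))"
proof -
  have ex: "1 \<le> N - 1 \<and> N - 1 < N \<and> y \<le> xs (Suc (N - 1))"
    using N2 xN assms by (simp add: Suc_diff_1)
  have L: "1 \<le> idx y \<and> idx y < N \<and> y \<le> xs (Suc (idx y))"
    unfolding idx_def by (rule LeastI[of _ "N - 1"]) (rule ex)
  have "xs (idx y) \<le> y"
  proof (cases "idx y = 1")
    case True then show ?thesis using x1 assms by simp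
  next
    case False
    then have "1 \<le> idx y - 1" "idx y - 1 < N" using L by auto
    moreover have "idx y - 1 < idx y" using L by simp
    ultimately have "\<not> y \<le> xs (Suc (idx y - 1))"
      using not_less_Least[of "idx y - 1" "\<lambda>i. 1 \<le> i \<and> i < N \<and> y \<le> xs (Suc i)"]
      unfolding idx_def by blast
    then show ?thesis using L by simp
  qed
  then show ?thesis using L by simp
qed

lemma cover:
  assumes "y \<in> {0..1}"
  shows "idx y \<in> {1..N-1} \<and> uinv (idx y) y \<in> {0..1} \<and> affmap xs (idx y) (uinv (idx y) y) = y"
proof -
  have P: "1 \<le> idx y" "idx y < N" "xs (idx y) \<le> y" "y \<le> xs (Suc (idx y))" using idx_props[OF assms] by auto
  have d: "0 < xs (Suc (idx y)) - xs (idx y)" using inc P by simp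
  show ?thesis using P d by (auto simp: uinv_def affmap_def field_simps)
qed

definition Aop :: "(real \<Rightarrow> real) \<Rightarrow> real \<Rightarrow> real" where
  "Aop \<psi> y = (if y \<in> {0..1} then \<alpha> (idx y) (uinv (idx y) y) * \<psi> (uinv (idx y) y) else 0)"

lemma Aop_aff:
  assumes p0: "\<psi> 0 = 0" and p1: "\<psi> 1 = 0" and i: "i \<in> {1..N-1}" and t: "t \<in> {0..1}"
  shows "Aop \<psi> (affmap xs i t) = \<alpha> i t * \<psi> t"
proof -
  define y where "y = affmap xs i t"
  have R: "xs i \<le> y" "y \<le> xs (Suc i)" "y \<in> {0..1}" using aff_range[OF i t] by (auto simp: y_def)
  define j where "j = idx y"
  have J: "1 \<le> j" "j < N" "xs j \<le> y" "y \<le> xs (Suc j)" using idx_props[OF R(3)] by (auto simp: j_def)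
  have "j \<le> i" unfolding j_def idx_def using i R by (intro Least_le) auto
  have "1 \<le> i" "i < N" using i N2 by auto
  then have d: "0 < xs (Suc i) - xs i" using inc[of i] by simp
  show ?thesis
  proof (cases "j = i")
    case True
    then have "uinv j y = t" using d by (simp add: uinv_def y_def affmap_def)
    then show ?thesis using True R by (simp add: Aop_def y_def[symmetric] j_def[symmetric])
  next
    case False
    with \<open>j \<le> i\<close> have ji: "j < i" by simp
    have "xs (Suc j) \<le> xs i" using mono_le[of "Suc j" i] ji i J by simp
    then have ye: "y = xs i" "xs (Suc j) = xs i" using R J by auto
    have sj: "Suc j = i"
    proof (rule ccontr)
      assume "Suc j \<noteq> i"
      then have "xs (Suc j) < xs i" using mono_less[of "Suc j" i] ji i by simp
      then show False using ye by simp
    qed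
    have t0: "t = 0" using ye(1) d by (simp add: y_def affmap_def)
    have u1: "uinv j y = 1" using ye inc[of j] J by (simp add: uinv_def)
    have "Aop \<psi> y = \<alpha> j (uinv j y) * \<psi> (uinv j y)" using R(3) by (simp add: Aop_def j_def)
    then show ?thesis using u1 t0 p0 p1 by (simp add: y_def)
  qed
qed

lemma Aop_0: "\<psi> 0 = 0 \<Longrightarrow> \<psi> 1 = 0 \<Longrightarrow> Aop \<psi> 0 = 0"
  using Aop_aff[of \<psi> 1 0] N2 x1 by (simp add: affmap_def)

lemma Aop_1: "\<psi> 0 = 0 \<Longrightarrow> \<psi> 1 = 0 \<Longrightarrow> Aop \<psi> 1 = 0"
proof -
  assume a: "\<psi> 0 = 0" "\<psi> 1 = 0"
  have "affmap xs (N - 1) 1 = 1" using N2 xN by (simp add: affmap_def Suc_diff_1)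
  then show ?thesis using Aop_aff[OF a, of "N - 1" 1] N2 a by simp
qed

lemma Aop_bound:
  assumes "\<forall>t\<in>{0..1}. \<bar>\<psi> t\<bar> \<le> K" "0 \<le> K"
  shows "\<bar>Aop \<psi> y\<bar> \<le> c * K"
proof (cases "y \<in> {0..1}")
  case True
  note C = cover[OF True]
  have "\<bar>\<alpha> (idx y) (uinv (idx y) y)\<bar> \<le> c" using ab C by blast
  moreover have "\<bar>\<psi> (uinv (idx y) y)\<bar> \<le> K" using assms C by blast
  ultimately show ?thesis using True by (simp add: Aop_def abs_mult mult_mono c0)
next
  case False then show ?thesis using c0 assms by (auto simp: Aop_def)
qed

lemma it_01: "\<phi> 0 = 0 \<Longrightarrow> \<phi> 1 = 0 \<Longrightarrow> (Aop ^^ m) \<phi> 0 = 0 \<and> (Aop ^^ m) \<phi> 1 = 0"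
  by (induct m) (auto simp: Aop_0 Aop_1)

lemma it_bound:
  assumes "\<forall>t\<in>{0..1}. \<bar>\<phi> t\<bar> \<le> E"
  shows "\<bar>(Aop ^^ Suc m) \<phi> y\<bar> \<le> c ^ Suc m * E"
proof -
  have "\<bar>\<phi> 0\<bar> \<le> E" using assms by simp
  then have E0: "0 \<le> E" by (meson abs_ge_zero order_trans)
  have "\<forall>y. \<bar>(Aop ^^ Suc m) \<phi> y\<bar> \<le> c ^ Suc m * E"
  proof (induct m)
    case 0 then show ?case using Aop_bound[OF assms E0] by simp
  next
    case (Suc m)
    have "0 \<le> c ^ Suc m * E" using c0 E0 by simp
    then show ?case using Aop_bound[of "(Aop ^^ Suc m) \<phi>" "c ^ Suc m * E"] Suc by (simp add: mult.assoc)
  qed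
  then show ?thesis by blast
qed

lemma fractal_close:
  assumes hK: "\<forall>t\<in>{0..1}. \<bar>h t\<bar> \<le> K"
    and m0: "MKZ n q h 0 = h 0" and m1: "MKZ n q h 1 = h 1"
    and hE: "\<forall>t\<in>{0..1}. \<bar>h t - MKZ n q h t\<bar> \<le> E"
  shows "\<forall>y\<in>{0..1}. \<bar>fractal xs N \<alpha> n q h y - h y\<bar> \<le> E / (1 - c)"
proof -
  define m where "m = MKZ n q h"
  define \<phi> where "\<phi> t = h t - m t" for t
  have p0: "\<phi> 0 = 0" and p1: "\<phi> 1 = 0" using m0 m1 by (simp_all add: \<phi>_def m_def)
  have pE: "\<forall>t\<in>{0..1}. \<bar>\<phi> t\<bar> \<le> E" using hE by (simp add: \<phi>_def m_def)
  have "\<bar>\<phi> 0\<bar> \<le> E" using pE by simp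
  then have E0: "0 \<le> E" by (meson abs_ge_zero order_trans)
  define H where "H y = (\<Sum>k. (Aop ^^ Suc k) \<phi> y)" for y
  have geo: "(\<lambda>k. c^k * E) sums (E / (1 - c))"
    using sums_mult2[OF geometric_sums[of c], of E] c0 c1 by simp
  have tle: "norm ((Aop ^^ Suc k) \<phi> y) \<le> c^k * E" for k y
  proof -
    have "c ^ Suc k * E \<le> c^k * E" using c0 c1 E0 by (intro mult_right_mono) (auto simp: power_le_one mult_left_le_one_le)
    then show ?thesis using it_bound[OF pE, of k y] by simp
  qed
  have sg: "summable (\<lambda>k. c^k * E)" using geo by (simp add: sums_iff)
  have sH: "summable (\<lambda>k. norm ((Aop ^^ Suc k) \<phi> y))" for y
    by (rule summable_comparison_test'[OF sg]) (use tle in simp)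
  have sH': "summable (\<lambda>k. (Aop ^^ Suc k) \<phi> y)" for y by (rule summable_norm_cancel[OF sH])
  have Hb: "\<bar>H y\<bar> \<le> E / (1 - c)" for y
  proof -
    have "norm (H y) \<le> (\<Sum>k. norm ((Aop ^^ Suc k) \<phi> y))" unfolding H_def by (rule summable_norm[OF sH])
    also have "\<dots> \<le> (\<Sum>k. c^k * E)" using suminf_le[OF tle sH] geo by (simp add: sums_iff)
    also have "\<dots> = E / (1 - c)" using geo by (simp add: sums_iff)
    finally show ?thesis by simp
  qed
  have z01: "(Aop ^^ Suc k) \<phi> 0 = 0" "(Aop ^^ Suc k) \<phi> 1 = 0" for k
    using it_01[OF p0 p1, of "Suc k"] by blast+
  have H01: "H 0 = 0" "H 1 = 0" unfolding H_def z01 by simp_all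
  have Hfix: "H y = Aop \<phi> y + Aop H y" for y
  proof (cases "y \<in> {0..1}")
    case False
    have zz: "(Aop ^^ Suc k) \<phi> y = 0" for k using False by (auto simp: Aop_def)
    have "Aop \<psi> y = 0" for \<psi> using False by (auto simp: Aop_def)
    then show ?thesis unfolding H_def zz by simp
  next
    case True
    define u where "u = uinv (idx y) y"
    define a where "a = \<alpha> (idx y) u"
    have Ay: "Aop \<psi> y = a * \<psi> u" for \<psi> using True by (simp add: Aop_def a_def u_def)
    have "Aop H y = (\<Sum>k. a * (Aop ^^ Suc k) \<phi> u)"
      unfolding Ay H_def by (rule suminf_mult[OF sH', symmetric])
    also have "\<dots> = (\<Sum>k. (Aop ^^ Suc (Suc k)) \<phi> y)" by (simp add: Ay)
    also have "\<dots> = H y - Aop \<phi> y" unfolding H_def using suminf_split_head[OF sH'[of y]] by simp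
    finally show ?thesis by simp
  qed
  define G where "G y = (if y \<in> {0..1} then h y + H y else 0)" for y
  define P where "P = (\<lambda>G. (\<forall>t. t \<notin> {0..1} \<longrightarrow> G t = 0) \<and>
      (\<exists>B. \<forall>t\<in>{0..1}. \<bar>G t\<bar> \<le> B) \<and>
      (\<forall>i\<in>{1..N-1}. \<forall>t\<in>{0..1}.
          G (affmap xs i t) = h (affmap xs i t) + \<alpha> i t * (G t - MKZ n q h t)))"
  have PG: "P G"
    unfolding P_def
  proof (intro conjI allI impI ballI)
    fix t :: real assume "t \<notin> {0..1}" then show "G t = 0" by (auto simp: G_def)
  next
    show "\<exists>B. \<forall>t\<in>{0..1}. \<bar>G t\<bar> \<le> B"
    proof (intro exI ballI)
      fix t :: real assume t: "t \<in> {0..1}"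
      have "\<bar>h t + H t\<bar> \<le> K + E / (1 - c)" 
      proof -
        have "\<bar>h t\<bar> \<le> K" using hK t by blast
        then show ?thesis using Hb[of t] abs_triangle_ineq[of "h t" "H t"] by linarith
      qed
      then show "\<bar>G t\<bar> \<le> K + E / (1 - c)" using t by (simp add: G_def)
    qed
  next
    fix i :: nat and t :: real assume i: "i \<in> {1..N-1}" and t: "t \<in> {0..1}"
    have y: "affmap xs i t \<in> {0..1}" using aff_range[OF i t] by simp
    have "H (affmap xs i t) = \<alpha> i t * \<phi> t + \<alpha> i t * H t"
      using Hfix[of "affmap xs i t"] Aop_aff[OF p0 p1 i t] Aop_aff[OF H01 i t] by simp
    then show "G (affmap xs i t) = h (affmap xs i t) + \<alpha> i t * (G t - MKZ n q h t)"
      using y t by (simp add: G_def \<phi>_def m_def algebra_simps)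
  qed
  have uniq: "G' = G" if PG': "P G'" for G'
  proof
    fix y
    show "G' y = G y"
    proof (cases "y \<in> {0..1}")
      case False then show ?thesis using PG PG' by (simp add: P_def)
    next
      case True
      have EQ': "\<forall>i\<in>{1..N-1}. \<forall>t\<in>{0..1}. G' (affmap xs i t) = h (affmap xs i t) + \<alpha> i t * (G' t - MKZ n q h t)"
        using PG' unfolding P_def by blast
      have EQ: "\<forall>i\<in>{1..N-1}. \<forall>t\<in>{0..1}. G (affmap xs i t) = h (affmap xs i t) + \<alpha> i t * (G t - MKZ n q h t)"
        using PG unfolding P_def by blast
      obtain B1 where B1: "\<forall>t\<in>{0..1}. \<bar>G' t\<bar> \<le> B1" using PG' by (auto simp: P_def)
      obtain B2 where B2: "\<forall>t\<in>{0..1}. \<bar>G t\<bar> \<le> B2" using PG by (auto simp: P_def)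
      have st: "\<forall>z\<in>{0..1}. \<bar>G' z - G z\<bar> \<le> c^k * (B1 + B2)" for k
      proof (induct k)
        case 0
        show ?case
        proof
          fix z :: real assume z: "z \<in> {0..1}"
          have "\<bar>G' z - G z\<bar> \<le> \<bar>G' z\<bar> + \<bar>G z\<bar>" by (rule abs_triangle_ineq4)
          also have "\<dots> \<le> B1 + B2" using B1 B2 z by (intro add_mono) auto
          finally show "\<bar>G' z - G z\<bar> \<le> c ^ 0 * (B1 + B2)" by simp
        qed
      next
        case (Suc k)
        show ?case
        proof
          fix z :: real assume z: "z \<in> {0..1}"
          note C = cover[OF z]
          define i where "i = idx z"
          define u where "u = uinv i z"
          have i: "i \<in> {1..N-1}" and u: "u \<in> {0..1}" and zu: "affmap xs i u = z"
            using C by (auto simp: i_def u_def)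
          have e1: "G' z = h z + \<alpha> i u * (G' u - MKZ n q h u)"
            using EQ'[rule_format, OF i u] zu by simp
          have e2: "G z = h z + \<alpha> i u * (G u - MKZ n q h u)"
            using EQ[rule_format, OF i u] zu by simp
          have "G' z - G z = \<alpha> i u * (G' u - G u)"
            using e1 e2 by (simp add: algebra_simps)
          then have "\<bar>G' z - G z\<bar> = \<bar>\<alpha> i u\<bar> * \<bar>G' u - G u\<bar>"
            by (simp add: abs_mult)
          also have "\<dots> \<le> c * (c^k * (B1 + B2))"
            using ab[OF i u] Suc u c0 by (intro mult_mono) auto
          finally show "\<bar>G' z - G z\<bar> \<le> c ^ Suc k * (B1 + B2)" by (simp add: mult.assoc)
        qed
      qed
      have lim: "(\<lambda>k. c^k * (B1 + B2)) \<longlonglongrightarrow> 0"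
        using c0 c1 by (intro tendsto_mult_left_zero LIMSEQ_power_zero) simp
      have "\<bar>G' y - G y\<bar> \<le> 0"
        by (rule LIMSEQ_le_const[OF lim]) (use st True in auto)
      then show ?thesis by simp
    qed
  qed
  have "fractal xs N \<alpha> n q h = G"
    unfolding fractal_def P_def[symmetric]
  proof (rule the1_equality)
    show "\<exists>!G. P G" using PG uniq by blast
  qed (rule PG)
  then show ?thesis using Hb by (simp add: G_def)
qed

end



lemma qint_big:
  assumes q: "\<And>n. 0 < qs n \<and> qs n \<le> 1" and lim: "qs \<longlonglongrightarrow> 1"
  shows "\<exists>n0. \<forall>n\<ge>n0. B \<le> qint (qs n) n"
proof -
  define m where "m = nat \<lceil>2 * B\<rceil> + 1"
  have m1: "1 \<le> m" and m2: "2 * B \<le> real m" unfolding m_def by linarith+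
  have "(\<lambda>n. qs n ^ m) \<longlonglongrightarrow> 1" using tendsto_power[OF lim, of m] by simp
  then have "\<forall>\<^sub>F n in sequentially. 1/2 < qs n ^ m" by (rule order_tendstoD(1)) simp
  then obtain N1 where N1: "\<And>n. n \<ge> N1 \<Longrightarrow> 1/2 < qs n ^ m" unfolding eventually_sequentially by blast
  show ?thesis
  proof (intro exI allI impI)
    fix n assume n: "max N1 m \<le> n"
    have q0: "0 \<le> qs n" "qs n \<le> 1" using q[of n] by auto
    have "real m * qs n ^ m = (\<Sum>j<m. qs n ^ m)" by simp
    also have "\<dots> \<le> (\<Sum>j<m. qs n ^ j)"
      by (intro sum_mono power_decreasing) (use q0 in auto)
    also have "\<dots> = qint (qs n) m" by (simp add: qint_sum)
    also have "\<dots> \<le> qint (qs n) n" using n q0 by (intro qint_mono) auto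
    finally have a: "real m * qs n ^ m \<le> qint (qs n) n" .
    have "real m * (1/2) \<le> real m * qs n ^ m" using N1[of n] n by (intro mult_left_mono) auto
    then show "B \<le> qint (qs n) n" using a m2 by linarith
  qed
qed

lemma MKZ_0:
  assumes "0 \<le> q" shows "MKZ n q h 0 = h 0"
proof -
  have "(\<lambda>k. cc q n k * 0^k * h (tt q n k)) = (\<lambda>k. if k = 0 then h 0 else 0)"
    using assms by (auto simp: tt_def)
  moreover have "(\<lambda>k. if k = 0 then h 0 else 0) sums h 0" using sums_single[of 0 "\<lambda>_. h 0"] by simp
  ultimately have "(\<Sum>k. cc q n k * 0^k * h (tt q n k)) = h 0" by (simp add: sums_iff)
  then show ?thesis by (simp add: MKZ_eq PP_def)
qed

theorem theorem5p3:
  fixes xs :: "nat \<Rightarrow> real" and N :: nat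
    and qs :: "nat \<Rightarrow> real"
    and \<alpha> :: "nat \<Rightarrow> real \<Rightarrow> real"
    and f :: "nat \<Rightarrow> real \<Rightarrow> real"
  assumes "2 \<le> N" and "xs 1 = 0" and "xs N = 1"
    and "\<And>i. 1 \<le> i \<Longrightarrow> i < N \<Longrightarrow> xs i < xs (Suc i)"
    and "\<And>n. 0 < qs n \<and> qs n \<le> 1"
    and "qs \<longlonglongrightarrow> 1"
    and "\<And>i. i \<in> {1..N-1} \<Longrightarrow> \<exists>c<1. \<forall>t\<in>{0..1}. \<bar>\<alpha> i t\<bar> \<le> c"
    and "\<And>s. continuous_on {0..1} (f s)"
    and "\<And>g \<epsilon>. continuous_on {0..1} g \<Longrightarrow> \<epsilon> > 0 \<Longrightarrow>
            \<exists>s. \<forall>t\<in>{0..1}. \<bar>g t - f s t\<bar> \<le> \<epsilon>"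
  shows "\<forall>g \<epsilon>. continuous_on {0..1} g \<longrightarrow> \<epsilon> > 0 \<longrightarrow>
     (\<exists>n\<ge>1. \<exists>T c. finite T \<and>
        (\<forall>t\<in>{0..1}. \<bar>g t - (\<Sum>s\<in>T. c s * fractal xs N \<alpha> n (qs n) (f s) t)\<bar> \<le> \<epsilon>))"
proof (intro allI impI)
  fix g :: "real \<Rightarrow> real" and \<epsilon> :: real
  assume gc: "continuous_on {0..1} g" and ep: "\<epsilon> > 0"
  define C where "C i = (SOME c. c < 1 \<and> (\<forall>t\<in>{0..1}. \<bar>\<alpha> i t\<bar> \<le> c))" for i
  have Ci: "C i < 1 \<and> (\<forall>t\<in>{0..1}. \<bar>\<alpha> i t\<bar> \<le> C i)" if "i \<in> {1..N-1}" for i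
    unfolding C_def using someI_ex[OF assms(7)[OF that]] by blast
  define c where "c = Max (insert 0 (C ` {1..N-1}))"
  have c0: "0 \<le> c" unfolding c_def by (intro Max_ge) auto
  have c1: "c < 1" unfolding c_def using Ci by (subst Max_less_iff) auto
  have cge: "C i \<le> c" if "i \<in> {1..N-1}" for i unfolding c_def using that by (intro Max_ge) auto
  interpret F: frac_setup xs N \<alpha> c
  proof
    fix i t assume i: "i \<in> {1..N-1}" and t: "t \<in> {0..(1::real)}"
    show "\<bar>\<alpha> i t\<bar> \<le> c" using Ci[OF i] t cge[OF i] by fastforce
  qed (use assms(1-4) c0 c1 in auto)
  obtain s where s: "\<forall>t\<in>{0..1}. \<bar>g t - f s t\<bar> \<le> \<epsilon> / 2" using assms(9)[OF gc, of "\<epsilon>/2"] ep by auto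
  define h where "h = f s"
  have hc: "continuous_on {0..1} h" using assms(8) by (simp add: h_def)
  have "compact (h ` {0..1})" by (intro compact_continuous_image hc compact_Icc)
  then obtain K where K: "\<forall>y\<in>h ` {0..1}. norm y \<le> K" using compact_imp_bounded bounded_iff by metis
  have hK: "\<forall>t\<in>{0..1}. \<bar>h t\<bar> \<le> K" using K by auto
  define \<eta> where "\<eta> = (1 - c) * \<epsilon> / 4"
  have eta: "0 < \<eta>" using c1 ep by (simp add: \<eta>_def)
  obtain L where L0: "0 \<le> L" and L: "\<forall>s\<in>{0..1}. \<forall>y\<in>{0..1}. \<bar>h s - h y\<bar> \<le> \<eta> + L * (s - y)^2"
    using unif_bound[OF hc eta] by blast
  define B where "B = 4 * L / ((1 - c) * \<epsilon>) + 1"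
  have B1: "1 \<le> B" using L0 c1 ep by (simp add: B_def)
  have LB: "L / B \<le> \<eta>"
  proof -
    have "\<eta> * B = L + \<eta>" using c1 ep by (simp add: B_def \<eta>_def field_simps)
    then have "L \<le> \<eta> * B" using eta by simp
    then show ?thesis using B1 by (simp add: divide_le_eq mult.commute)
  qed
  obtain n0 where n0: "\<And>n. n \<ge> n0 \<Longrightarrow> B \<le> qint (qs n) n" using qint_big[OF assms(5,6)] by blast
  define n where "n = max n0 1"
  define q where "q = qs n"
  have n1: "1 \<le> n" by (simp add: n_def)
  have qB: "B \<le> qint q n" using n0[of n] by (simp add: n_def q_def)
  have q: "0 < q" "q \<le> 1" using assms(5)[of n] by (auto simp: q_def)
  have hE: "\<forall>t\<in>{0..1}. \<bar>h t - MKZ n q h t\<bar> \<le> 2 * \<eta>"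
  proof
    fix t :: real assume t: "t \<in> {0..1}"
    have "\<bar>MKZ n q h t - h t\<bar> \<le> \<eta> + L / qint q n"
      using MKZ_approx[OF q n1, of t \<eta> L h] t eta L0 L by auto
    also have "L / qint q n \<le> L / B" using qB B1 L0 by (intro divide_left_mono) auto
    finally show "\<bar>h t - MKZ n q h t\<bar> \<le> 2 * \<eta>" using LB by (simp add: abs_minus_commute)
  qed
  have close: "\<forall>y\<in>{0..1}. \<bar>fractal xs N \<alpha> n q h y - h y\<bar> \<le> 2 * \<eta> / (1 - c)"
    by (rule F.fractal_close[OF hK MKZ_0 _ hE]) (use q in \<open>auto simp: MKZ_def\<close>)
  have e2: "2 * \<eta> / (1 - c) = \<epsilon> / 2" using c1 by (simp add: \<eta>_def field_simps)
  show "\<exists>n\<ge>1. \<exists>T c. finite T \<and>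
        (\<forall>t\<in>{0..1}. \<bar>g t - (\<Sum>s\<in>T. c s * fractal xs N \<alpha> n (qs n) (f s) t)\<bar> \<le> \<epsilon>)"
  proof (intro exI conjI ballI)
    show "1 \<le> n" by (rule n1)
    show "finite {s}" by simp
    fix t :: real assume t: "t \<in> {0..1}"
    have a: "\<bar>g t - h t\<bar> \<le> \<epsilon> / 2" using s t by (simp add: h_def)
    have b: "\<bar>fractal xs N \<alpha> n q h t - h t\<bar> \<le> \<epsilon> / 2" using close t e2 by simp
    show "\<bar>g t - (\<Sum>s\<in>{s}. (\<lambda>_. 1) s * fractal xs N \<alpha> n (qs n) (f s) t)\<bar> \<le> \<epsilon>"
      using a b unfolding q_def h_def abs_le_iff by simp
  qed
qed

end
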